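(* Let $F$ be a field, $A$ a finitely generated free abelian group and $F * A$ a twisted group algebra of $A$ over $F$. Then $F * A$ has center exactly $F$ if and only if for every subgroup $A_1 \le A$ of finite index in $A$ the twisted group algebra $F * A_1$ has center $F$.
   Context: A twisted group algebra $F * A$ of a finitely generated free abelian group $A$ over a field $F$ is an associative $F$-algebra with an $F$-basis $\{\bar a : a \in A\}$ (a copy of $A$) such that $\bar a_1 \bar a_2 = \tau(a_1,a_2)\overline{a_1a_2}$ for all $a_1,a_2\in A$, where $\tau : A\times A \to F\setminus\{0\}$ satisfies $\tau(a_1,a_2)\tau(a_1a_2,a_3)=\tau(a_2,a_3)\tau(a_1,a_2a_3)$. For a subgroup $B \le A$, $F * B$ denotes the subalgebra of $F * A$ spanned by $\{\bar b : b \in B\}$; it is a twisted group algebra of $B$. *)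

theory Defs
  imports Main "HOL-Library.Function_Algebras"
begin

text \<open>The free abelian group of rank n, written additively: integer vectors
  nat => int vanishing from index n on (a copy of Z^n).\<close>
definition Zn :: "nat \<Rightarrow> (nat \<Rightarrow> int) set" where
  "Zn n = {v. \<forall>i\<ge>n. v i = 0}"

definition subgrp :: "(nat \<Rightarrow> int) set \<Rightarrow> (nat \<Rightarrow> int) set \<Rightarrow> bool" where
  "subgrp B A \<longleftrightarrow> B \<subseteq> A \<and> 0 \<in> B \<and> (\<forall>x\<in>B. \<forall>y\<in>B. x + y \<in> B) \<and> (\<forall>x\<in>B. - x \<in> B)"

definition finite_index :: "(nat \<Rightarrow> int) set \<Rightarrow> (nat \<Rightarrow> int) set \<Rightarrow> bool" where
  "finite_index B A \<longleftrightarrow> finite ((\<lambda>a. (\<lambda>b. a + b) ` B) ` A)"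

definition cocycle :: "(nat \<Rightarrow> int) set \<Rightarrow> ((nat \<Rightarrow> int) \<Rightarrow> (nat \<Rightarrow> int) \<Rightarrow> 'f::field) \<Rightarrow> bool" where
  "cocycle A \<tau> \<longleftrightarrow> (\<forall>a\<in>A. \<forall>b\<in>A. \<tau> a b \<noteq> 0) \<and>
     (\<forall>a1\<in>A. \<forall>a2\<in>A. \<forall>a3\<in>A. \<tau> a1 a2 * \<tau> (a1 + a2) a3 = \<tau> a2 a3 * \<tau> a1 (a2 + a3))"

text \<open>Elements of F*B: finitely supported coefficient functions supported in B;
  x corresponds to sum over a of (x a) * bar a.\<close>
definition tga_elems :: "(nat \<Rightarrow> int) set \<Rightarrow> ((nat \<Rightarrow> int) \<Rightarrow> 'f::field) set" where
  "tga_elems B = {x. finite {a. x a \<noteq> 0} \<and> {a. x a \<noteq> 0} \<subseteq> B}"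

text \<open>Twisted multiplication: bar a * bar b = tau a b * bar (a+b), extended bilinearly.\<close>
definition tga_mult :: "((nat \<Rightarrow> int) \<Rightarrow> (nat \<Rightarrow> int) \<Rightarrow> 'f::field)
    \<Rightarrow> ((nat \<Rightarrow> int) \<Rightarrow> 'f) \<Rightarrow> ((nat \<Rightarrow> int) \<Rightarrow> 'f) \<Rightarrow> ((nat \<Rightarrow> int) \<Rightarrow> 'f)" where
  "tga_mult \<tau> x y = (\<lambda>c. \<Sum>a\<in>{a. x a \<noteq> 0}. \<Sum>b\<in>{b. y b \<noteq> 0}.
      if a + b = c then \<tau> a b * x a * y b else 0)"

definition tga_center :: "((nat \<Rightarrow> int) \<Rightarrow> (nat \<Rightarrow> int) \<Rightarrow> 'f::field) \<Rightarrow> (nat \<Rightarrow> int) set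
    \<Rightarrow> ((nat \<Rightarrow> int) \<Rightarrow> 'f) set" where
  "tga_center \<tau> B = {x \<in> tga_elems B. \<forall>y \<in> tga_elems B. tga_mult \<tau> x y = tga_mult \<tau> y x}"

text \<open>The copy of F inside F*B: the F-multiples of bar 0 (the unit is tau(0,0)^-1 bar 0).\<close>
definition tga_scalars :: "((nat \<Rightarrow> int) \<Rightarrow> 'f::field) set" where
  "tga_scalars = {x. \<exists>c. x = (\<lambda>a. if a = 0 then c else 0)}"

end

theory Submission
  imports Defs
begin

definition mono :: "(nat \<Rightarrow> int) \<Rightarrow> 'f::field \<Rightarrow> (nat \<Rightarrow> int) \<Rightarrow> 'f" where
  "mono a c = (\<lambda>x. if x = a then c else 0)"

definition smul :: "nat \<Rightarrow> (nat \<Rightarrow> int) \<Rightarrow> (nat \<Rightarrow> int)" where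
  "smul k b = (\<lambda>i. int k * b i)"

definition beta :: "((nat \<Rightarrow> int) \<Rightarrow> (nat \<Rightarrow> int) \<Rightarrow> 'f::field) \<Rightarrow> (nat \<Rightarrow> int) \<Rightarrow> (nat \<Rightarrow> int) \<Rightarrow> 'f" where
  "beta \<tau> a b = \<tau> a b / \<tau> b a"

lemma smul_0: "smul 0 b = 0" by (auto simp: smul_def fun_eq_iff)
lemma smul_Suc: "smul (Suc k) b = b + smul k b" by (auto simp: smul_def fun_eq_iff algebra_simps)
lemma smul_mult: "smul (p * q) b = smul p (smul q b)" by (auto simp: smul_def fun_eq_iff)
lemma smul_diff: "j \<le> k \<Longrightarrow> smul k b = smul j b + smul (k - j) b"
  by (auto simp: smul_def fun_eq_iff algebra_simps of_nat_diff)

lemma Zn_add: "a \<in> Zn n \<Longrightarrow> b \<in> Zn n \<Longrightarrow> a + b \<in> Zn n" by (auto simp: Zn_def)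
lemma Zn_0: "0 \<in> Zn n" by (auto simp: Zn_def)
lemma Zn_smul: "a \<in> Zn n \<Longrightarrow> smul k a \<in> Zn n" by (auto simp: Zn_def smul_def)

lemma subgrp_smul: "subgrp B A \<Longrightarrow> b \<in> B \<Longrightarrow> smul k b \<in> B"
  by (induction k) (auto simp: subgrp_def smul_0 smul_Suc)

lemma supp_mono: "c \<noteq> 0 \<Longrightarrow> {x. mono a c x \<noteq> 0} = {a}"
  by (auto simp: mono_def)

lemma mono_elems: "a \<in> B \<Longrightarrow> mono a c \<in> tga_elems B"
  by (auto simp: tga_elems_def mono_def)

lemma mono_central:
  assumes "\<forall>b\<in>B. \<tau> a b = \<tau> b a" "y \<in> tga_elems B"
  shows "tga_mult \<tau> (mono a c) y = tga_mult \<tau> y (mono a c)"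
proof (cases "c = 0")
  case True
  then have "mono a c = (\<lambda>_. 0)" by (auto simp: mono_def)
  then show ?thesis by (simp add: tga_mult_def)
next
  case False
  show ?thesis
    unfolding tga_mult_def supp_mono[OF False]
  proof (rule ext, simp, rule sum.cong)
    fix e b assume "b \<in> {b. y b \<noteq> 0}"
    then have "b \<in> B" using assms(2) by (auto simp: tga_elems_def)
    then show "(if a + b = e then \<tau> a b * mono a c a * y b else 0) =
          (if b + a = e then \<tau> b a * y b * mono a c a else 0)"
      using assms(1) by (auto simp: add.commute)
  qed simp
qed

lemma coeff_right:
  assumes "finite {a. x a \<noteq> 0}"
  shows "tga_mult \<tau> x (mono v 1) (u + v) = \<tau> u v * x u"
proof -
  have "tga_mult \<tau> x (mono v 1) (u + v) = (\<Sum>a'\<in>{a. x a \<noteq> 0}. if a' = u then \<tau> a' v * x a' else 0)"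
    unfolding tga_mult_def supp_mono[OF one_neq_zero] by (intro sum.cong) (auto simp: mono_def)
  also have "\<dots> = \<tau> u v * x u" using assms by (simp add: sum.delta)
  finally show ?thesis .
qed

lemma coeff_left:
  assumes "finite {a. x a \<noteq> 0}"
  shows "tga_mult \<tau> (mono v 1) x (u + v) = \<tau> v u * x u"
proof -
  have "tga_mult \<tau> (mono v 1) x (u + v) = (\<Sum>a'\<in>{a. x a \<noteq> 0}. if a' = u then \<tau> v a' * x a' else 0)"
    unfolding tga_mult_def supp_mono[OF one_neq_zero]
    apply (simp add: mono_def)
    apply (rule sum.cong)
     apply (auto simp: add.commute mono_def)
    done
  also have "\<dots> = \<tau> v u * x u" using assms by (simp add: sum.delta)
  finally show ?thesis .
qed

context
  fixes n :: nat and \<tau> :: "(nat \<Rightarrow> int) \<Rightarrow> (nat \<Rightarrow> int) \<Rightarrow> 'f::field"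
  assumes coc: "cocycle (Zn n) \<tau>"
begin

lemma tnz: "a \<in> Zn n \<Longrightarrow> b \<in> Zn n \<Longrightarrow> \<tau> a b \<noteq> 0"
  using coc by (auto simp: cocycle_def)

lemma tco: "a \<in> Zn n \<Longrightarrow> b \<in> Zn n \<Longrightarrow> c \<in> Zn n \<Longrightarrow> \<tau> a b * \<tau> (a + b) c = \<tau> b c * \<tau> a (b + c)"
  using coc by (auto simp: cocycle_def)

lemma t0: assumes "a \<in> Zn n" shows "\<tau> 0 a = \<tau> a 0"
proof -
  have 1: "\<tau> 0 0 * \<tau> 0 a = \<tau> 0 a * \<tau> 0 a" using tco[OF Zn_0 Zn_0 assms] by simp
  have 2: "\<tau> a 0 * \<tau> a 0 = \<tau> 0 0 * \<tau> a 0" using tco[OF assms Zn_0 Zn_0] by simp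
  from 1 have "\<tau> 0 0 = \<tau> 0 a" using tnz[OF Zn_0 assms] by simp
  moreover from 2 have "\<tau> a 0 = \<tau> 0 0" using tnz[OF assms Zn_0] by simp
  ultimately show ?thesis by simp
qed

lemma ident:
  assumes a: "a \<in> Zn n" and b: "b \<in> Zn n" and c: "c \<in> Zn n"
  shows "\<tau> a (b+c) * \<tau> b a * \<tau> c a = \<tau> (b+c) a * \<tau> a b * \<tau> a c"
proof -
  have e1: "\<tau> a b * \<tau> (a+b) c = \<tau> b c * \<tau> a (b+c)" using tco a b c by blast
  have e2: "\<tau> b a * \<tau> (a+b) c = \<tau> a c * \<tau> b (c+a)" using tco[OF b a c] by (simp add: add.commute)
  have e3: "\<tau> b c * \<tau> (b+c) a = \<tau> c a * \<tau> b (c+a)" using tco b c a by blast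
  have "\<tau> b c * (\<tau> a (b+c) * \<tau> b a * \<tau> c a) = (\<tau> a b * \<tau> (a+b) c) * \<tau> b a * \<tau> c a"
    using e1 by (simp add: ac_simps)
  also have "\<dots> = \<tau> a b * \<tau> c a * (\<tau> b a * \<tau> (a+b) c)" by (simp add: ac_simps)
  also have "\<dots> = \<tau> a b * \<tau> c a * (\<tau> a c * \<tau> b (c+a))" using e2 by simp
  also have "\<dots> = \<tau> a b * \<tau> a c * (\<tau> c a * \<tau> b (c+a))" by (simp add: ac_simps)
  also have "\<dots> = \<tau> a b * \<tau> a c * (\<tau> b c * \<tau> (b+c) a)" using e3 by simp
  also have "\<dots> = \<tau> b c * (\<tau> (b+c) a * \<tau> a b * \<tau> a c)" by (simp add: ac_simps)
  finally show ?thesis using tnz[OF b c] by simp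
qed

lemma beta_add2:
  assumes a: "a \<in> Zn n" and b: "b \<in> Zn n" and c: "c \<in> Zn n"
  shows "beta \<tau> a (b+c) = beta \<tau> a b * beta \<tau> a c"
  using ident[OF a b c] tnz[OF b a] tnz[OF c a] tnz[OF Zn_add[OF b c] a]
  by (simp add: beta_def field_simps)

lemma beta_inv: "beta \<tau> b a = inverse (beta \<tau> a b)"
  by (simp add: beta_def)

lemma beta_add1:
  assumes a: "a \<in> Zn n" and a': "a' \<in> Zn n" and b: "b \<in> Zn n"
  shows "beta \<tau> (a+a') b = beta \<tau> a b * beta \<tau> a' b"
  by (metis beta_inv beta_add2[OF b a a'] inverse_mult_distrib)

lemma beta_zero2: "a \<in> Zn n \<Longrightarrow> beta \<tau> a 0 = 1"
  using t0 tnz Zn_0 by (simp add: beta_def)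

lemma beta_smul2: "a \<in> Zn n \<Longrightarrow> b \<in> Zn n \<Longrightarrow> beta \<tau> a (smul k b) = beta \<tau> a b ^ k"
  by (induction k) (simp_all add: smul_0 smul_Suc beta_zero2 beta_add2 Zn_smul)

lemma beta_smul1: "a \<in> Zn n \<Longrightarrow> b \<in> Zn n \<Longrightarrow> beta \<tau> (smul k a) b = beta \<tau> a b ^ k"
  by (metis beta_inv beta_smul2 power_inverse)

end

lemma cos_img: "a \<in> Zn n \<Longrightarrow> (\<lambda>b. a + b) ` Zn n = Zn n"
proof
  assume a: "a \<in> Zn n"
  show "(\<lambda>b. a + b) ` Zn n \<subseteq> Zn n" using a Zn_add by blast
  show "Zn n \<subseteq> (\<lambda>b. a + b) ` Zn n"
  proof
    fix x assume x: "x \<in> Zn n"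
    have "x - a \<in> Zn n" using a x by (auto simp: Zn_def)
    then show "x \<in> (\<lambda>b. a + b) ` Zn n" by (rule image_eqI[rotated]) simp
  qed
qed

lemma finite_index_mult:
  assumes sg: "subgrp A1 (Zn n)" and fi: "finite_index A1 (Zn n)"
  shows "\<exists>M>0. \<forall>b\<in>Zn n. smul M b \<in> A1"
proof -
  define cos where "cos = (\<lambda>a. (\<lambda>b. a + b) ` A1) ` Zn n"
  define N where "N = card cos"
  have fc: "finite cos" using fi by (simp add: finite_index_def cos_def)
  have key: "\<exists>k>0. k \<le> N \<and> smul k b \<in> A1" if b: "b \<in> Zn n" for b
  proof -
    define f where "f k = (\<lambda>x. smul k b + x) ` A1" for k
    have sub: "f ` {0..N} \<subseteq> cos" using b Zn_smul by (auto simp: f_def cos_def)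
    have "\<not> inj_on f {0..N}"
    proof
      assume "inj_on f {0..N}"
      then have "card (f ` {0..N}) = Suc N" by (simp add: card_image)
      moreover have "card (f ` {0..N}) \<le> N" using card_mono[OF fc sub] N_def by simp
      ultimately show False by simp
    qed
    then obtain j k where jk: "j \<in> {0..N}" "k \<in> {0..N}" "j \<noteq> k" "f j = f k"
      by (auto simp: inj_on_def)
    have gen: "smul (k - j) b \<in> A1" if "j < k" "f j = f k" for j k
    proof -
      have "smul k b \<in> f k" unfolding f_def using sg
        by (auto simp: subgrp_def intro!: image_eqI[where x=0])
      then have "smul k b \<in> f j" using that by simp
      then obtain t where t: "t \<in> A1" "smul k b = smul j b + t" by (auto simp: f_def)
      have "smul k b = smul j b + smul (k - j) b" using that smul_diff by simp
      with t have "smul (k - j) b = t" by simp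
      with t show ?thesis by simp
    qed
    show ?thesis
    proof (cases "j < k")
      case True then show ?thesis using gen[OF True jk(4)] jk by (intro exI[of _ "k - j"]) auto
    next
      case False then have "k < j" using jk by simp
      then show ?thesis using gen[OF \<open>k < j\<close> jk(4)[symmetric]] jk by (intro exI[of _ "j - k"]) auto
    qed
  qed
  show ?thesis
  proof (intro exI[of _ "fact N"] conjI ballI)
    show "(0::nat) < fact N" by simp
    fix b assume "b \<in> Zn n"
    then obtain k where k: "k > 0" "k \<le> N" "smul k b \<in> A1" using key by blast
    then have "k dvd fact N" by (simp add: dvd_fact)
    then obtain q where q: "fact N = q * k" by (metis dvd_def mult.commute)
    show "smul (fact N) b \<in> A1" unfolding q smul_mult using subgrp_smul[OF sg k(3)] .
  qed
qed

theorem proposition2p1: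
  fixes n :: nat and \<tau> :: "(nat \<Rightarrow> int) \<Rightarrow> (nat \<Rightarrow> int) \<Rightarrow> 'f::field"
  assumes "cocycle (Zn n) \<tau>"
  shows "tga_center \<tau> (Zn n) = tga_scalars \<longleftrightarrow>
    (\<forall>A1. subgrp A1 (Zn n) \<and> finite_index A1 (Zn n) \<longrightarrow> tga_center \<tau> A1 = tga_scalars)"
proof
  note coc = assms
  have scal: "tga_scalars \<subseteq> tga_center \<tau> B" if sg: "subgrp B (Zn n)" for B
  proof
    fix x :: "(nat \<Rightarrow> int) \<Rightarrow> 'f" assume "x \<in> tga_scalars"
    then obtain c where x: "x = mono 0 c" by (auto simp: tga_scalars_def mono_def)
    have B0: "0 \<in> B" and BA: "B \<subseteq> Zn n" using sg by (auto simp: subgrp_def)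
    have "\<forall>b\<in>B. \<tau> 0 b = \<tau> b 0" using t0[OF coc] BA by blast
    then show "x \<in> tga_center \<tau> B" unfolding x tga_center_def
      using mono_elems[OF B0] mono_central by blast
  qed
  show "tga_center \<tau> (Zn n) = tga_scalars \<Longrightarrow>
    (\<forall>A1. subgrp A1 (Zn n) \<and> finite_index A1 (Zn n) \<longrightarrow> tga_center \<tau> A1 = tga_scalars)"
  proof (intro allI impI)
    fix A1 assume cA: "tga_center \<tau> (Zn n) = tga_scalars"
      and h: "subgrp A1 (Zn n) \<and> finite_index A1 (Zn n)"
    have sg: "subgrp A1 (Zn n)" using h by simp
    have BA: "A1 \<subseteq> Zn n" using sg by (auto simp: subgrp_def)
    obtain M where M: "M > 0" "\<forall>b\<in>Zn n. smul M b \<in> A1" using finite_index_mult h by blast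
    show "tga_center \<tau> A1 = tga_scalars"
    proof
      show "tga_scalars \<subseteq> tga_center \<tau> A1" using scal sg .
      show "tga_center \<tau> A1 \<subseteq> tga_scalars"
      proof
        fix x assume xc: "x \<in> tga_center \<tau> A1"
        have fx: "finite {a. x a \<noteq> 0}" and sx: "{a. x a \<noteq> 0} \<subseteq> A1"
          using xc by (auto simp: tga_center_def tga_elems_def)
        have supp0: "a = 0" if xa: "x a \<noteq> 0" for a
        proof -
          have aA1: "a \<in> A1" using xa sx by auto
          have aA: "a \<in> Zn n" using aA1 BA by auto
          have comm: "beta \<tau> a b = 1" if "b \<in> A1" for b
          proof -
            have "tga_mult \<tau> x (mono b 1) = tga_mult \<tau> (mono b 1) x"
              using xc mono_elems[OF that] by (auto simp: tga_center_def)
            then have "tga_mult \<tau> x (mono b 1) (a + b) = tga_mult \<tau> (mono b 1) x (a + b)" by simp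
            then have "\<tau> a b * x a = \<tau> b a * x a" using coeff_right[OF fx] coeff_left[OF fx] by simp
            then have "\<tau> a b = \<tau> b a" using xa by simp
            then show ?thesis using tnz[OF coc] aA that BA by (auto simp: beta_def)
          qed
          define a' where "a' = smul M a"
          have a'A: "a' \<in> Zn n" using aA Zn_smul by (simp add: a'_def)
          have "\<forall>b\<in>Zn n. \<tau> a' b = \<tau> b a'"
          proof
            fix b assume b: "b \<in> Zn n"
            have "beta \<tau> a b ^ M = beta \<tau> a (smul M b)" using beta_smul2[OF coc aA b] by simp
            also have "\<dots> = 1" using comm M b by blast
            finally have "beta \<tau> a' b = 1" unfolding a'_def using beta_smul1[OF coc aA b] by simp
            then show "\<tau> a' b = \<tau> b a'" using tnz[OF coc b a'A] by (simp add: beta_def)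
          qed
          then have "mono a' (1::'f) \<in> tga_center \<tau> (Zn n)"
            unfolding tga_center_def using mono_elems[OF a'A] mono_central by blast
          then have "mono a' (1::'f) \<in> tga_scalars" using cA by simp
          then obtain c where "mono a' (1::'f) = (\<lambda>a. if a = 0 then c else 0)"
            by (auto simp: tga_scalars_def)
          then have "mono a' (1::'f) a' = (if a' = 0 then c else 0)" by metis
          then have "a' = 0" by (auto simp: mono_def split: if_splits)
          then show "a = 0" using M(1) by (auto simp: a'_def smul_def fun_eq_iff)
        qed
        have "x = (\<lambda>a. if a = 0 then x 0 else 0)"
        proof (rule ext)
          fix e show "x e = (if e = 0 then x 0 else 0)" using supp0[of e] by auto
        qed
        then show "x \<in> tga_scalars" by (auto simp: tga_scalars_def)
      qed
    qed
  qed
  show "(\<forall>A1. subgrp A1 (Zn n) \<and> finite_index A1 (Zn n) \<longrightarrow> tga_center \<tau> A1 = tga_scalars) \<Longrightarrow>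
     tga_center \<tau> (Zn n) = tga_scalars"
  proof -
    assume all: "\<forall>A1. subgrp A1 (Zn n) \<and> finite_index A1 (Zn n) \<longrightarrow> tga_center \<tau> A1 = tga_scalars"
    have "subgrp (Zn n) (Zn n)" by (auto simp: subgrp_def Zn_def)
    moreover have "finite_index (Zn n) (Zn n)"
    proof -
      have "(\<lambda>a. (\<lambda>b. a + b) ` Zn n) ` Zn n \<subseteq> {Zn n}" using cos_img by auto
      then show ?thesis unfolding finite_index_def using finite_subset by blast
    qed
    ultimately show ?thesis using all by blast
  qed
qed

end
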